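(* Let $C$ be an identifying code of $K_n\times K_m$. If $cs(C)=n-1$, then there is no column $C_j$ with $C\cap C_j=\{u,v\}$ (for distinct $u,v$) where both $u$ and $v$ are row-isolated in $C$. Similarly, if $rs(C)=m-1$, there is no row $R_r$ with $C\cap R_r=\{u,v\}$ (for distinct $u,v$) where both $u$ and $v$ are column-isolated in $C$.
   Context: $K_n\times K_m$ is the direct product of complete graphs: vertex set $[n]\times[m]$, with $(i,r)$ adjacent to $(j,s)$ iff $i\ne j$ and $r \ne s$. An identifying code is a dominating set $C$ with $N[x]\cap C\ne N[y]\cap C$ for all distinct vertices $x,y$ ($N[x]$ the closed neighborhood). Columns: $C_i=\{(i,t):t\in[m]\}$; rows: $R_r=\{(k,r):k\in[n]\}$. $cs(C)$ (resp. $rs(C)$) is the number of columns (resp. rows) meeting $C$. A vertex $v=(i,r)$ is column-isolated in $C$ if $C\cap C_i=\{v\}$ and row-isolated in $C$ if $C\cap R_r=\{v\}$. *)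

theory Defs
  imports Main
begin

definition verts :: "nat \<Rightarrow> nat \<Rightarrow> (nat \<times> nat) set" where
  "verts n m = {1..n} \<times> {1..m}"

definition adj :: "nat \<times> nat \<Rightarrow> nat \<times> nat \<Rightarrow> bool" where
  "adj x y \<longleftrightarrow> fst x \<noteq> fst y \<and> snd x \<noteq> snd y"

definition closed_nbhd :: "nat \<Rightarrow> nat \<Rightarrow> nat \<times> nat \<Rightarrow> (nat \<times> nat) set" where
  "closed_nbhd n m x = {y \<in> verts n m. y = x \<or> adj x y}"

definition is_identifying_code :: "nat \<Rightarrow> nat \<Rightarrow> (nat \<times> nat) set \<Rightarrow> bool" where
  "is_identifying_code n m C \<longleftrightarrow>
     C \<subseteq> verts n m \<and>
     (\<forall>x \<in> verts n m. closed_nbhd n m x \<inter> C \<noteq> {}) \<and>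
     (\<forall>x \<in> verts n m. \<forall>y \<in> verts n m. x \<noteq> y \<longrightarrow>
        closed_nbhd n m x \<inter> C \<noteq> closed_nbhd n m y \<inter> C)"

definition col :: "nat \<Rightarrow> nat \<Rightarrow> (nat \<times> nat) set" where
  "col m i = {(i, t) | t. t \<in> {1..m}}"

definition row :: "nat \<Rightarrow> nat \<Rightarrow> (nat \<times> nat) set" where
  "row n r = {(k, r) | k. k \<in> {1..n}}"

definition cs :: "nat \<Rightarrow> nat \<Rightarrow> (nat \<times> nat) set \<Rightarrow> nat" where
  "cs n m C = card {i \<in> {1..n}. C \<inter> col m i \<noteq> {}}"

definition rs :: "nat \<Rightarrow> nat \<Rightarrow> (nat \<times> nat) set \<Rightarrow> nat" where
  "rs n m C = card {r \<in> {1..m}. C \<inter> row n r \<noteq> {}}"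

definition col_isolated :: "nat \<Rightarrow> nat \<Rightarrow> (nat \<times> nat) set \<Rightarrow> nat \<times> nat \<Rightarrow> bool" where
  "col_isolated n m C v \<longleftrightarrow> C \<inter> col m (fst v) = {v}"

definition row_isolated :: "nat \<Rightarrow> nat \<Rightarrow> (nat \<times> nat) set \<Rightarrow> nat \<times> nat \<Rightarrow> bool" where
  "row_isolated n m C v \<longleftrightarrow> C \<inter> row n (snd v) = {v}"

end

theory Submission
  imports Defs
begin

lemma part1:
  assumes ic: "is_identifying_code n m C" and cs: "cs n m C = n - 1"
    and j: "j \<in> {1..n}" and uv: "u \<noteq> v" and cj: "C \<inter> col m j = {u, v}"
    and ru: "row_isolated n m C u" and rv: "row_isolated n m C v"
  shows False
proof -
  have sub: "C \<subseteq> verts n m" using ic by (simp add: is_identifying_code_def)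
  have uC: "u \<in> C" "u \<in> col m j" "v \<in> C" "v \<in> col m j" using cj by auto
  obtain a b where u: "u = (j,a)" and v: "v = (j,b)" using uC by (auto simp: col_def)
  have ab: "a \<in> {1..m}" "b \<in> {1..m}" using uC u v by (auto simp: col_def)
  have ra: "C \<inter> row n a = {u}" using ru u by (simp add: row_isolated_def)
  have rb: "C \<inter> row n b = {v}" using rv v by (simp add: row_isolated_def)
  let ?S = "{i \<in> {1..n}. C \<inter> col m i \<noteq> {}}"
  have "?S \<subseteq> {1..n}" by auto
  moreover have "card ?S < card {1..n}" using cs j unfolding cs_def by auto
  ultimately have "?S \<noteq> {1..n}" by auto
  then obtain k where k: "k \<in> {1..n}" "k \<notin> ?S" by blast
  have colk: "\<And>x. x \<in> C \<Longrightarrow> fst x \<noteq> k"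
  proof -
    fix x assume "x \<in> C"
    then have "x \<in> verts n m" using sub by auto
    then show "fst x \<noteq> k" using k \<open>x \<in> C\<close> by (cases x) (auto simp: verts_def col_def)
  qed
  have jk: "j \<noteq> k" using k cj by auto
  have xu: "(k,b) \<noteq> u" using u jk by auto
  have kbv: "(k,b) \<in> verts n m" "u \<in> verts n m" using k ab u j by (auto simp: verts_def)
  have eq: "closed_nbhd n m (k,b) \<inter> C = closed_nbhd n m u \<inter> C"
  proof (rule set_eqI)
    fix x
    show "x \<in> closed_nbhd n m (k,b) \<inter> C \<longleftrightarrow> x \<in> closed_nbhd n m u \<inter> C"
    proof (cases "x \<in> C")
      case False then show ?thesis by auto
    next
      case True
      obtain i s where x: "x = (i,s)" by (cases x)
      have xv: "x \<in> verts n m" using True sub by auto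
      have ik: "i \<noteq> k" using colk[OF True] x by simp
      have A: "x \<in> closed_nbhd n m (k,b) \<longleftrightarrow> x \<noteq> v"
      proof
        assume "x \<in> closed_nbhd n m (k,b)"
        then show "x \<noteq> v" using v ik jk x by (auto simp: closed_nbhd_def adj_def)
      next
        assume "x \<noteq> v"
        have "s \<noteq> b"
        proof
          assume "s = b"
          then have "x \<in> row n b" using xv x by (auto simp: row_def verts_def)
          then show False using rb True \<open>x \<noteq> v\<close> by auto
        qed
        then show "x \<in> closed_nbhd n m (k,b)" using xv ik x by (auto simp: closed_nbhd_def adj_def)
      qed
      have B: "x \<in> closed_nbhd n m u \<longleftrightarrow> x \<noteq> v"
      proof
        assume "x \<in> closed_nbhd n m u"
        then show "x \<noteq> v" using u v uv x by (auto simp: closed_nbhd_def adj_def)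
      next
        assume xnv: "x \<noteq> v"
        show "x \<in> closed_nbhd n m u"
        proof (cases "x = u")
          case True then show ?thesis using kbv by (simp add: closed_nbhd_def)
        next
          case False
          have "i \<noteq> j"
          proof
            assume "i = j"
            then have "x \<in> col m j" using xv x by (auto simp: col_def verts_def)
            then show False using cj True False xnv by auto
          qed
          moreover have "s \<noteq> a"
          proof
            assume "s = a"
            then have "x \<in> row n a" using xv x by (auto simp: row_def verts_def)
            then show False using ra True False by auto
          qed
          ultimately show ?thesis using xv x u by (auto simp: closed_nbhd_def adj_def)
        qed
      qed
      show ?thesis using A B True by auto
    qed
  qed
  then show False using ic kbv xu unfolding is_identifying_code_def by blast
qed

lemma part2:
  assumes ic: "is_identifying_code n m C" and rs: "rs n m C = m - 1"
    and j: "j \<in> {1..m}" and uv: "u \<noteq> v" and cj: "C \<inter> row n j = {u, v}"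
    and ru: "col_isolated n m C u" and rv: "col_isolated n m C v"
  shows False
proof -
  have sub: "C \<subseteq> verts n m" using ic by (simp add: is_identifying_code_def)
  have uC: "u \<in> C" "u \<in> row n j" "v \<in> C" "v \<in> row n j" using cj by auto
  obtain a b where u: "u = (a,j)" and v: "v = (b,j)" using uC by (auto simp: row_def)
  have ab: "a \<in> {1..n}" "b \<in> {1..n}" using uC u v by (auto simp: row_def)
  have ra: "C \<inter> col m a = {u}" using ru u by (simp add: col_isolated_def)
  have rb: "C \<inter> col m b = {v}" using rv v by (simp add: col_isolated_def)
  let ?S = "{i \<in> {1..m}. C \<inter> row n i \<noteq> {}}"
  have "?S \<subseteq> {1..m}" by auto
  moreover have "card ?S < card {1..m}" using rs j unfolding rs_def by auto
  ultimately have "?S \<noteq> {1..m}" by auto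
  then obtain k where k: "k \<in> {1..m}" "k \<notin> ?S" by blast
  have colk: "\<And>x. x \<in> C \<Longrightarrow> snd x \<noteq> k"
  proof -
    fix x assume "x \<in> C"
    then have "x \<in> verts n m" using sub by auto
    then show "snd x \<noteq> k" using k \<open>x \<in> C\<close> by (cases x) (auto simp: verts_def row_def)
  qed
  have jk: "j \<noteq> k" using k cj by auto
  have xu: "(b,k) \<noteq> u" using u jk by auto
  have kbv: "(b,k) \<in> verts n m" "u \<in> verts n m" using k ab u j by (auto simp: verts_def)
  have eq: "closed_nbhd n m (b,k) \<inter> C = closed_nbhd n m u \<inter> C"
  proof (rule set_eqI)
    fix x
    show "x \<in> closed_nbhd n m (b,k) \<inter> C \<longleftrightarrow> x \<in> closed_nbhd n m u \<inter> C"
    proof (cases "x \<in> C")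
      case False then show ?thesis by auto
    next
      case True
      obtain s i where x: "x = (s,i)" by (cases x)
      have xv: "x \<in> verts n m" using True sub by auto
      have ik: "i \<noteq> k" using colk[OF True] x by simp
      have A: "x \<in> closed_nbhd n m (b,k) \<longleftrightarrow> x \<noteq> v"
      proof
        assume "x \<in> closed_nbhd n m (b,k)"
        then show "x \<noteq> v" using v ik jk x by (auto simp: closed_nbhd_def adj_def)
      next
        assume "x \<noteq> v"
        have "s \<noteq> b"
        proof
          assume "s = b"
          then have "x \<in> col m b" using xv x by (auto simp: col_def verts_def)
          then show False using rb True \<open>x \<noteq> v\<close> by auto
        qed
        then show "x \<in> closed_nbhd n m (b,k)" using xv ik x by (auto simp: closed_nbhd_def adj_def)
      qed
      have B: "x \<in> closed_nbhd n m u \<longleftrightarrow> x \<noteq> v"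
      proof
        assume "x \<in> closed_nbhd n m u"
        then show "x \<noteq> v" using u v uv x by (auto simp: closed_nbhd_def adj_def)
      next
        assume xnv: "x \<noteq> v"
        show "x \<in> closed_nbhd n m u"
        proof (cases "x = u")
          case True then show ?thesis using kbv by (simp add: closed_nbhd_def)
        next
          case False
          have "i \<noteq> j"
          proof
            assume "i = j"
            then have "x \<in> row n j" using xv x by (auto simp: row_def verts_def)
            then show False using cj True False xnv by auto
          qed
          moreover have "s \<noteq> a"
          proof
            assume "s = a"
            then have "x \<in> col m a" using xv x by (auto simp: col_def verts_def)
            then show False using ra True False by auto
          qed
          ultimately show ?thesis using xv x u by (auto simp: closed_nbhd_def adj_def)
        qed
      qed
      show ?thesis using A B True by auto
    qed
  qed
  then show False using ic kbv xu unfolding is_identifying_code_def by blast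
qed

theorem mainTheorem10:
  fixes n m :: nat and C :: "(nat \<times> nat) set"
  assumes "is_identifying_code n m C"
  shows "(cs n m C = n - 1 \<longrightarrow>
            \<not> (\<exists>j \<in> {1..n}. \<exists>u v. u \<noteq> v \<and> C \<inter> col m j = {u, v} \<and>
                 row_isolated n m C u \<and> row_isolated n m C v))
       \<and> (rs n m C = m - 1 \<longrightarrow>
            \<not> (\<exists>r \<in> {1..m}. \<exists>u v. u \<noteq> v \<and> C \<inter> row n r = {u, v} \<and>
                 col_isolated n m C u \<and> col_isolated n m C v))"
  using part1[OF assms] part2[OF assms] by blast

end
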